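(* Let $N\ge1$, $0<\lambda\le\Lambda$, and assume $\beta=\frac{\Lambda}{\lambda}(N-1)+1>2$. Let $u:\mathbb{R}^N\to[0,\infty)$ be a nonnegative lower semicontinuous function and set $m(R)=\min_{|x|\le R}u(x)$ for $R\ge0$. (i) If $\mathcal{M}^+_{\lambda,\Lambda}(D^2u)\ge0$ in $\mathbb{R}^N$ in the viscosity sense, then $R\mapsto m(R)R^{\beta-2}$ is nondecreasing on $(0,\infty)$. (ii) Let $1<\gamma\le\frac{\beta}{\beta-1}$. If $\mathcal{M}^+_{\lambda,\Lambda}(D^2u)\ge|Du|^\gamma$ in $\mathbb{R}^N$ in the viscosity sense and $m(R)\to0$ as $R\to\infty$, then for every $\nu\in(0,\beta-2)$ there exists $R_\nu>0$ such that $R\mapsto m(R)R^{\nu}$ is nondecreasing on $[R_\nu,\infty)$.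
   Context: For $M\in\mathrm{Sym}_N$ with eigenvalues $e_1,\dots,e_N$, $\mathcal{M}^+_{\lambda,\Lambda}(M)=\sup_{\lambda I_N\le A\le\Lambda I_N}(-\mathrm{Tr}(AM))=-\lambda\sum_{e_k>0}e_k-\Lambda\sum_{e_k<0}e_k$. A viscosity solution of an inequality $G(x,u,Du,D^2u)\ge 0$ in an open set $\Omega$ is a lower semicontinuous $u$ such that for every $x_0\in\Omega$ and every $\varphi\in C^2$ for which $u-\varphi$ has a local minimum at $x_0$, $G(x_0,u(x_0),D\varphi(x_0),D^2\varphi(x_0))\ge0$. *)

theory Defs
  imports "HOL-Analysis.Analysis"
begin

definition pucci_admissible :: "real \<Rightarrow> real \<Rightarrow> real^'n^'n \<Rightarrow> bool" where
  "pucci_admissible l L A \<longleftrightarrow> transpose A = A \<and>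
     (\<forall>x::real^'n. l * (x \<bullet> x) \<le> x \<bullet> (A *v x) \<and> x \<bullet> (A *v x) \<le> L * (x \<bullet> x))"

definition pucci_max :: "real \<Rightarrow> real \<Rightarrow> real^'n^'n \<Rightarrow> real" where
  "pucci_max l L M = (SUP A \<in> {A. pucci_admissible l L A}. - trace (A ** M))"

definition lsc :: "('a::topological_space \<Rightarrow> real) \<Rightarrow> bool" where
  "lsc u \<longleftrightarrow> (\<forall>a. open {x. a < u x})"

definition C2_with :: "(real^'n \<Rightarrow> real) \<Rightarrow> (real^'n \<Rightarrow> real^'n) \<Rightarrow> (real^'n \<Rightarrow> real^'n^'n) \<Rightarrow> bool" where
  "C2_with phi Dphi Hphi \<longleftrightarrow>
     (\<forall>x. (phi has_derivative (\<lambda>h. Dphi x \<bullet> h)) (at x)) \<and>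
     (\<forall>x. (Dphi has_derivative (\<lambda>h. Hphi x *v h)) (at x)) \<and>
     continuous_on UNIV Hphi"

definition visc_super :: "(real^'n \<Rightarrow> real \<Rightarrow> real^'n \<Rightarrow> real^'n^'n \<Rightarrow> real) \<Rightarrow> (real^'n \<Rightarrow> real) \<Rightarrow> bool" where
  "visc_super G u \<longleftrightarrow> lsc u \<and>
     (\<forall>x0 phi Dphi Hphi. C2_with phi Dphi Hphi \<and>
        (\<forall>\<^sub>F x in at x0. u x - phi x \<ge> u x0 - phi x0) \<longrightarrow>
        G x0 (u x0) (Dphi x0) (Hphi x0) \<ge> 0)"

definition ball_min :: "(real^'n \<Rightarrow> real) \<Rightarrow> real \<Rightarrow> real" where
  "ball_min u R = Inf (u ` cball 0 R)"

end

theory Submission imports Defs begin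

lemma quad_form: "(x::real^'n) \<bullet> (A *v x) = (\<Sum>i\<in>UNIV. \<Sum>j\<in>UNIV. x$i * A$i$j * x$j)"
  by (simp add: inner_vec_def matrix_vector_mult_def sum_distrib_left mult.assoc)

lemma trace_minus_quad:
  fixes A :: "real^'n^'n" and x :: "real^'n"
  defines "s \<equiv> x \<bullet> x"
  defines "v \<equiv> \<lambda>i. s *\<^sub>R axis i 1 - x$i *\<^sub>R x"
  shows "(\<Sum>i\<in>UNIV. v i \<bullet> (A *v v i)) = s * (s * trace A - x \<bullet> (A *v x))"
    and "(\<Sum>i\<in>UNIV. v i \<bullet> v i) = (real CARD('n) - 1) * s * s"
proof -
  have s: "s = (\<Sum>k\<in>UNIV. x$k * x$k)" by (simp add: s_def inner_vec_def)
  have vc: "\<And>i j. v i $ j = s * (if j = i then 1 else 0) - x$i * x$j"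
    by (simp add: v_def axis_def)
  have "(\<Sum>i\<in>UNIV. v i \<bullet> (A *v v i)) =
     (\<Sum>i\<in>UNIV. \<Sum>j\<in>UNIV. \<Sum>k\<in>UNIV. (s * (if j = i then 1 else 0) - x$i * x$j) * A$j$k * (s * (if k = i then 1 else 0) - x$i * x$k))"
    by (simp add: quad_form vc)
  also have "\<dots> = (\<Sum>i\<in>UNIV. \<Sum>j\<in>UNIV. \<Sum>k\<in>UNIV.
        s * s * ((if j = i then 1 else 0) * A$j$k * (if k = i then 1 else 0))
      - s * (x$i * ((if j = i then 1 else 0) * A$j$k * x$k))
      - s * (x$i * (x$j * A$j$k * (if k = i then 1 else 0)))
      + x$i * x$i * (x$j * A$j$k * x$k))"
    by (intro sum.cong refl) (simp add: algebra_simps)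
  also have "\<dots> = s * s * trace A - s * (x \<bullet> (A *v x)) - s * (x \<bullet> (A *v x)) + s * (x \<bullet> (A *v x))"
  proof -
    have d: "\<And>P (c::real). (if P then 1 else 0) * c = (if P then c else 0)"
         "\<And>P (c::real). c * (if P then 1 else 0) = (if P then c else 0)" by simp_all
    have e1: "(\<Sum>i\<in>UNIV. \<Sum>j\<in>UNIV. \<Sum>k\<in>UNIV. (if j = i then 1 else 0) * A$j$k * (if k = i then 1 else (0::real))) = trace A"
      by (simp add: trace_def d)
    have e2: "(\<Sum>i\<in>UNIV. \<Sum>j\<in>UNIV. \<Sum>k\<in>UNIV. x$i * ((if j = i then 1 else 0) * A$j$k * x$k)) = x \<bullet> (A *v x)"
    proof -
      have "\<And>i. (\<Sum>j\<in>UNIV. \<Sum>k\<in>UNIV. x$i * ((if j = i then 1 else 0) * A$j$k * x$k))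
          = (\<Sum>j\<in>UNIV. if j = i then (\<Sum>k\<in>UNIV. x$i * (A$j$k * x$k)) else 0)"
        by (intro sum.cong refl) auto
      then show ?thesis by (simp add: quad_form mult.assoc)
    qed
    have e3: "(\<Sum>i\<in>UNIV. \<Sum>j\<in>UNIV. \<Sum>k\<in>UNIV. x$i * (x$j * A$j$k * (if k = i then 1 else 0))) = x \<bullet> (A *v x)"
    proof -
      have "(\<Sum>i\<in>UNIV. \<Sum>j\<in>UNIV. \<Sum>k\<in>UNIV. x$i * (x$j * A$j$k * (if k = i then 1 else 0)))
         = (\<Sum>i\<in>UNIV. \<Sum>j\<in>UNIV. x$i * (x$j * A$j$i))"
        by (simp add: if_distrib cong: if_cong)
      also have "\<dots> = (\<Sum>j\<in>UNIV. \<Sum>i\<in>UNIV. x$j * A$j$i * x$i)"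
        by (subst sum.swap) (simp add: algebra_simps)
      finally show ?thesis by (simp add: quad_form)
    qed
    have e4: "(\<Sum>i\<in>UNIV. \<Sum>j\<in>UNIV. \<Sum>k\<in>UNIV. x$i * x$i * (x$j * A$j$k * x$k)) = s * (x \<bullet> (A *v x))"
      apply (simp add: s quad_form sum_distrib_left[symmetric] sum_distrib_right[symmetric] mult.assoc)
      apply (simp only: mult.assoc[symmetric] sum_distrib_right[symmetric])
      done
    show ?thesis
      by (simp only: sum.distrib sum_subtractf sum_distrib_left[of "s * s", symmetric] sum_distrib_left[of s, symmetric] e1 e2 e3 e4)
  qed
  finally show "(\<Sum>i\<in>UNIV. v i \<bullet> (A *v v i)) = s * (s * trace A - x \<bullet> (A *v x))"
    by (simp add: algebra_simps)
  have "(\<Sum>i\<in>UNIV. v i \<bullet> v i) = (\<Sum>i\<in>UNIV. \<Sum>j\<in>UNIV. (s * (if j = i then 1 else 0) - x$i * x$j) * (s * (if j = i then 1 else 0) - x$i * x$j))"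
    by (simp add: inner_vec_def vc)
  also have "\<dots> = (\<Sum>i\<in>UNIV. \<Sum>j\<in>UNIV. s * s * (if j = i then 1 else 0) - 2 * s * (if j = i then x$i * x$j else 0) + x$i * x$i * (x$j * x$j))"
    by (intro sum.cong refl) (auto simp: algebra_simps)
  also have "\<dots> = real CARD('n) * s * s - 2 * s * s + s * s"
    apply (simp add: sum.distrib sum_subtractf s sum_distrib_left[symmetric] sum_distrib_right[symmetric])
    apply (simp only: mult.assoc[symmetric] sum_distrib_right[symmetric])
    done
  finally show "(\<Sum>i\<in>UNIV. v i \<bullet> v i) = (real CARD('n) - 1) * s * s"
    by (simp add: algebra_simps)
qed

lemma trace_bound:
  fixes A :: "real^'n^'n" and x :: "real^'n"
  assumes adm: "pucci_admissible l L A" and x: "x \<noteq> 0"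
  shows "(x \<bullet> x) * trace A - x \<bullet> (A *v x) \<le> (real CARD('n) - 1) * L * (x \<bullet> x)"
proof -
  define s where "s = x \<bullet> x"
  define v where "v = (\<lambda>i. s *\<^sub>R axis i 1 - x$i *\<^sub>R x)"
  have s: "s > 0" using x by (simp add: s_def)
  have "(\<Sum>i\<in>UNIV. v i \<bullet> (A *v v i)) \<le> (\<Sum>i\<in>UNIV. L * (v i \<bullet> v i))"
    using adm by (intro sum_mono) (simp add: pucci_admissible_def)
  also have "\<dots> = L * ((real CARD('n) - 1) * s * s)"
    using trace_minus_quad(2)[of x] by (simp add: s_def v_def sum_distrib_left[symmetric])
  finally have "s * (s * trace A - x \<bullet> (A *v x)) \<le> s * ((real CARD('n) - 1) * L * s)"
    using trace_minus_quad(1)[of x A] by (simp add: s_def v_def algebra_simps)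
  then show ?thesis using s by (simp add: s_def)
qed

lemma trace_H:
  fixes A :: "real^'n^'n" and x :: "real^'n"
  shows "trace (A ** (\<chi> i j. \<alpha> * (if i = j then 1 else 0) + \<delta> * x$i * x$j)) = \<alpha> * trace A + \<delta> * (x \<bullet> (A *v x))"
proof -
  have "trace (A ** (\<chi> i j. \<alpha> * (if i = j then 1 else 0) + \<delta> * x$i * x$j))
     = (\<Sum>i\<in>UNIV. \<Sum>k\<in>UNIV. A$i$k * (\<alpha> * (if k = i then 1 else 0) + \<delta> * x$k * x$i))"
    by (simp add: trace_def matrix_matrix_mult_def)
  also have "\<dots> = (\<Sum>i\<in>UNIV. \<alpha> * A$i$i + \<delta> * (x$i * (\<Sum>k\<in>UNIV. A$i$k * x$k)))"
  proof (rule sum.cong[OF refl])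
    fix i
    have "(\<Sum>k\<in>UNIV. A$i$k * (\<alpha> * (if k = i then 1 else 0) + \<delta> * x$k * x$i))
        = (\<Sum>k\<in>UNIV. (if k = i then \<alpha> * A$i$k else 0) + \<delta> * (x$i * (A$i$k * x$k)))"
      by (intro sum.cong refl) (auto simp: algebra_simps)
    then show "(\<Sum>k\<in>UNIV. A$i$k * (\<alpha> * (if k = i then 1 else 0) + \<delta> * x$k * x$i))
        = \<alpha> * A$i$i + \<delta> * (x$i * (\<Sum>k\<in>UNIV. A$i$k * x$k))"
      by (simp add: sum.distrib sum_distrib_left)
  qed
  also have "\<dots> = \<alpha> * trace A + \<delta> * (x \<bullet> (A *v x))"
    by (simp add: trace_def sum.distrib sum_distrib_left inner_vec_def matrix_vector_mult_def)
  finally show ?thesis .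
qed

lemma adm_nonempty: "0 \<le> l \<Longrightarrow> l \<le> L \<Longrightarrow> pucci_admissible l L (mat l :: real^'n^'n)"
proof -
  have "mat l *v x = l *\<^sub>R x" for x :: "real^'n"
  proof -
    have "\<And>P (a::real) b. (if P then a else 0) * b = (if P then a * b else 0)" by simp
    then show ?thesis by (simp add: vec_eq_iff matrix_vector_mult_def mat_def)
  qed
  then show "pucci_admissible l L (mat l :: real^'n^'n)" if "0 \<le> l" "l \<le> L"
    using that by (auto simp: pucci_admissible_def intro!: mult_right_mono)
qed

lemma pucci_bound:
  fixes x :: "real^'n"
  assumes l: "0 < l" "l \<le> L" and x: "x \<noteq> 0" and a: "\<alpha> \<le> 0" and ad: "\<alpha> + \<delta> * (x \<bullet> x) \<ge> 0"
  shows "pucci_max l L (\<chi> i j. \<alpha> * (if i = j then 1 else 0) + \<delta> * x$i * x$j)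
     \<le> - (\<alpha> + \<delta> * (x \<bullet> x)) * l - \<alpha> * (real CARD('n) - 1) * L"
  unfolding pucci_max_def
proof (rule cSUP_least)
  show "{A. pucci_admissible l L A} \<noteq> {}" using adm_nonempty[of l L] l by auto
next
  fix A :: "real^'n^'n" assume "A \<in> {A. pucci_admissible l L A}"
  then have adm: "pucci_admissible l L A" by simp
  define s where "s = x \<bullet> x"
  define q where "q = x \<bullet> (A *v x)"
  define N where "N = real CARD('n) - 1"
  have s: "s > 0" using x by (simp add: s_def)
  have q: "l * s \<le> q" using adm by (simp add: pucci_admissible_def s_def q_def)
  have t: "s * trace A \<le> q + N * L * s" using trace_bound[OF adm x] by (simp add: s_def q_def N_def)
  have 1: "(-\<alpha>) * (s * trace A) \<le> (-\<alpha>) * (q + N * L * s)"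
    using t a by (intro mult_left_mono) auto
  have 2: "(\<alpha> + \<delta> * s) * (l * s) \<le> (\<alpha> + \<delta> * s) * q"
    using q ad by (intro mult_left_mono) (auto simp: s_def)
  have "s * (- (\<alpha> * trace A + \<delta> * q)) \<le> s * (- (\<alpha> + \<delta> * s) * l - \<alpha> * N * L)"
    using 1 2 by (simp add: algebra_simps)
  then have "- (\<alpha> * trace A + \<delta> * q) \<le> - (\<alpha> + \<delta> * s) * l - \<alpha> * N * L"
    using s by simp
  then show "- trace (A ** (\<chi> i j. \<alpha> * (if i = j then 1 else 0) + \<delta> * x$i * x$j))
     \<le> - (\<alpha> + \<delta> * (x \<bullet> x)) * l - \<alpha> * (real CARD('n) - 1) * L"
    by (simp add: trace_H q_def s_def N_def)
qed

lemma radial_C2: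
  fixes G G' G'' :: "real \<Rightarrow> real"
  assumes d1: "\<And>t. t \<ge> 0 \<Longrightarrow> (G has_real_derivative G' t) (at t)"
    and d2: "\<And>t. t \<ge> 0 \<Longrightarrow> (G' has_real_derivative G'' t) (at t)"
    and c2: "\<And>t. t \<ge> 0 \<Longrightarrow> isCont G'' t"
  shows "C2_with (\<lambda>x::real^'n. G (x \<bullet> x)) (\<lambda>x. (2 * G' (x \<bullet> x)) *\<^sub>R x)
     (\<lambda>x. \<chi> i j. 2 * G' (x \<bullet> x) * (if i = j then 1 else 0) + 4 * G'' (x \<bullet> x) * x$i * x$j)"
  unfolding C2_with_def
proof (intro conjI allI)
  fix x :: "real^'n"
  have ix: "((\<lambda>x. x \<bullet> x) has_derivative (\<lambda>h. x \<bullet> h + h \<bullet> x)) (at x)"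
    by (auto intro!: derivative_eq_intros)
  show "((\<lambda>x. G (x \<bullet> x)) has_derivative (\<lambda>h. (2 * G' (x \<bullet> x)) *\<^sub>R x \<bullet> h)) (at x)"
    using DERIV_compose_FDERIV[OF d1 ix]
    by (rule has_derivative_eq_rhs) (auto simp: inner_commute algebra_simps)
  have k: "((\<lambda>x. 2 * G' (x \<bullet> x)) has_derivative (\<lambda>h. (x \<bullet> h + h \<bullet> x) * (2 * G'' (x \<bullet> x)))) (at x)"
    using DERIV_compose_FDERIV[OF DERIV_cmult[OF d2, of "x \<bullet> x" 2] ix] by simp
  have "((\<lambda>x. (2 * G' (x \<bullet> x)) *\<^sub>R x) has_derivative
      (\<lambda>h. (2 * G' (x \<bullet> x)) *\<^sub>R h + ((x \<bullet> h + h \<bullet> x) * (2 * G'' (x \<bullet> x))) *\<^sub>R x)) (at x)"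
    using has_derivative_scaleR[OF k has_derivative_ident] by simp
  then show "((\<lambda>x. (2 * G' (x \<bullet> x)) *\<^sub>R x) has_derivative
      (\<lambda>h. (\<chi> i j. 2 * G' (x \<bullet> x) * (if i = j then 1 else 0) + 4 * G'' (x \<bullet> x) * x$i * x$j) *v h)) (at x)"
  proof (rule has_derivative_eq_rhs)
    show "(\<lambda>h. (2 * G' (x \<bullet> x)) *\<^sub>R h + ((x \<bullet> h + h \<bullet> x) * (2 * G'' (x \<bullet> x))) *\<^sub>R x) =
      (\<lambda>h. (\<chi> i j. 2 * G' (x \<bullet> x) * (if i = j then 1 else 0) + 4 * G'' (x \<bullet> x) * x$i * x$j) *v h)"
    proof (intro ext iffD2[OF vec_eq_iff] allI)
      fix h :: "real^'n" and i
      have "((\<chi> i j. 2 * G' (x \<bullet> x) * (if i = j then 1 else 0) + 4 * G'' (x \<bullet> x) * x$i * x$j) *v h) $ i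
         = (\<Sum>j\<in>UNIV. (if i = j then 2 * G' (x \<bullet> x) * h$j else 0) + 4 * G'' (x \<bullet> x) * x$i * (x$j * h$j))"
        by (simp add: matrix_vector_mult_def algebra_simps) (intro sum.cong refl, auto)
      also have "\<dots> = 2 * G' (x \<bullet> x) * h$i + 4 * G'' (x \<bullet> x) * x$i * (x \<bullet> h)"
        by (simp add: sum.distrib sum_distrib_left inner_vec_def)
      finally show "((2 * G' (x \<bullet> x)) *\<^sub>R h + ((x \<bullet> h + h \<bullet> x) * (2 * G'' (x \<bullet> x))) *\<^sub>R x) $ i =
        ((\<chi> i j. 2 * G' (x \<bullet> x) * (if i = j then 1 else 0) + 4 * G'' (x \<bullet> x) * x$i * x$j) *v h) $ i"
        by (simp add: inner_commute algebra_simps)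
    qed
  qed
next
  have cG': "isCont G' t" if "t \<ge> 0" for t using d2[OF that] by (rule DERIV_isCont)
  have cinner: "continuous_on UNIV (\<lambda>x::real^'n. x \<bullet> x)" by (intro continuous_intros)
  have cG'x: "continuous_on UNIV (\<lambda>x::real^'n. G' (x \<bullet> x))"
    by (rule continuous_on_compose2[OF _ cinner, of "{0..}"]) (auto intro!: continuous_at_imp_continuous_on cG')
  have cG''x: "continuous_on UNIV (\<lambda>x::real^'n. G'' (x \<bullet> x))"
    by (rule continuous_on_compose2[OF _ cinner, of "{0..}"]) (auto intro!: continuous_at_imp_continuous_on c2)
  show "continuous_on UNIV (\<lambda>x::real^'n. \<chi> i j. 2 * G' (x \<bullet> x) * (if i = j then 1 else 0) + 4 * G'' (x \<bullet> x) * x$i * x$j)"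
    by (intro continuous_intros cG'x cG''x)
qed

lemma G_derivs:
  fixes a \<nu> \<epsilon> C :: real
  assumes e: "\<epsilon> > 0" and t: "t \<ge> 0"
  shows "((\<lambda>t. a * ((t + \<epsilon>) powr (-\<nu>/2) - C)) has_real_derivative (a * (-\<nu>/2) * (t + \<epsilon>) powr (-\<nu>/2 - 1))) (at t)"
    and "((\<lambda>t. a * (-\<nu>/2) * (t + \<epsilon>) powr (-\<nu>/2 - 1)) has_real_derivative (a * (-\<nu>/2) * (-\<nu>/2 - 1) * (t + \<epsilon>) powr (-\<nu>/2 - 2))) (at t)"
    and "isCont (\<lambda>t. a * (-\<nu>/2) * (-\<nu>/2 - 1) * (t + \<epsilon>) powr (-\<nu>/2 - 2)) t"
proof -
  have p: "t + \<epsilon> > 0" using e t by simp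
  show "((\<lambda>t. a * ((t + \<epsilon>) powr (-\<nu>/2) - C)) has_real_derivative (a * (-\<nu>/2) * (t + \<epsilon>) powr (-\<nu>/2 - 1))) (at t)"
    using p by (auto intro!: derivative_eq_intros)
  show "((\<lambda>t. a * (-\<nu>/2) * (t + \<epsilon>) powr (-\<nu>/2 - 1)) has_real_derivative (a * (-\<nu>/2) * (-\<nu>/2 - 1) * (t + \<epsilon>) powr (-\<nu>/2 - 2))) (at t)"
    using p by (auto intro!: derivative_eq_intros simp: field_simps)
  show "isCont (\<lambda>t. a * (-\<nu>/2) * (-\<nu>/2 - 1) * (t + \<epsilon>) powr (-\<nu>/2 - 2)) t"
    using p by (auto intro!: continuous_intros)
qed

lemma w_bound:
  fixes x0 :: "real^'n"
  assumes a: "a > 0" and nu: "\<nu> > 0" and e: "\<epsilon> > 0" and l: "0 < l" "l \<le> L" and x0: "x0 \<noteq> 0"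
    and es: "\<epsilon> \<le> (\<nu> + 1) * (x0 \<bullet> x0)"
  shows "pucci_max l L (\<chi> i j. 2 * (a * (-\<nu>/2) * (x0 \<bullet> x0 + \<epsilon>) powr (-\<nu>/2 - 1)) * (if i = j then 1 else 0)
            + 4 * (a * (-\<nu>/2) * (-\<nu>/2 - 1) * (x0 \<bullet> x0 + \<epsilon>) powr (-\<nu>/2 - 2)) * x0$i * x0$j)
     \<le> a * \<nu> * (x0 \<bullet> x0 + \<epsilon>) powr (-\<nu>/2 - 2) *
        ((x0 \<bullet> x0) * ((real CARD('n) - 1) * L - (\<nu> + 1) * l) + \<epsilon> * (l + (real CARD('n) - 1) * L))"
proof -
  define s where "s = x0 \<bullet> x0"
  define P where "P = (s + \<epsilon>) powr (-\<nu>/2 - 2)"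
  have s: "s > 0" using x0 by (simp add: s_def)
  have P: "P > 0" using s e by (simp add: P_def)
  have Q: "(s + \<epsilon>) powr (-\<nu>/2 - 1) = (s + \<epsilon>) * P"
  proof -
    have "-\<nu>/2 - 1 = 1 + (-\<nu>/2 - 2)" by simp
    then have "(s + \<epsilon>) powr (-\<nu>/2 - 1) = (s + \<epsilon>) powr (1 + (-\<nu>/2 - 2))" by metis
    also have "\<dots> = (s + \<epsilon>) * P" unfolding powr_add P_def using s e by simp
    finally show ?thesis .
  qed
  define \<alpha> where "\<alpha> = 2 * (a * (-\<nu>/2) * (s + \<epsilon>) powr (-\<nu>/2 - 1))"
  define \<delta> where "\<delta> = 4 * (a * (-\<nu>/2) * (-\<nu>/2 - 1) * P)"
  have \<alpha>: "\<alpha> = - (a * \<nu> * P) * (s + \<epsilon>)" unfolding \<alpha>_def Q by (simp add: algebra_simps)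
  have \<delta>: "\<delta> = (a * \<nu> * P) * (\<nu> + 2)" by (simp add: \<delta>_def algebra_simps)
  have aP: "a * \<nu> * P > 0" using a nu P by simp
  have "\<alpha> \<le> 0" using aP s e by (simp add: \<alpha>)
  moreover have "\<alpha> + \<delta> * s = (a * \<nu> * P) * ((\<nu> + 1) * s - \<epsilon>)" by (simp add: \<alpha> \<delta> algebra_simps)
  then have "\<alpha> + \<delta> * (x0 \<bullet> x0) \<ge> 0" using aP es by (simp add: s_def)
  ultimately have "pucci_max l L (\<chi> i j. \<alpha> * (if i = j then 1 else 0) + \<delta> * x0$i * x0$j)
     \<le> - (\<alpha> + \<delta> * (x0 \<bullet> x0)) * l - \<alpha> * (real CARD('n) - 1) * L"
    by (intro pucci_bound l x0)
  also have "\<dots> = a * \<nu> * P * (s * ((real CARD('n) - 1) * L - (\<nu> + 1) * l) + \<epsilon> * (l + (real CARD('n) - 1) * L))"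
    by (simp add: \<alpha> \<delta> s_def[symmetric] algebra_simps)
  finally show ?thesis by (simp add: \<alpha>_def \<delta>_def P_def s_def)
qed

lemma lsc_attains_min:
  fixes f :: "'a::topological_space \<Rightarrow> real"
  assumes f: "\<And>a. open {x. a < f x}" and K: "compact K" "K \<noteq> {}"
  shows "\<exists>x\<in>K. \<forall>y\<in>K. f x \<le> f y"
proof (rule ccontr)
  assume "\<not> ?thesis"
  then have h: "\<forall>x\<in>K. \<exists>y\<in>K. f y < f x" by (auto simp: not_le)
  have "K \<subseteq> (\<Union>y\<in>K. {x. f y < f x})" using h by auto
  then obtain F where F: "F \<subseteq> K" "finite F" "K \<subseteq> (\<Union>y\<in>F. {x. f y < f x})"
    using compactE_image[OF K(1), of K "\<lambda>y. {x. f y < f x}"] f by metis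
  have "F \<noteq> {}" using F K by auto
  then obtain y0 where y0: "y0 \<in> F" "\<forall>y\<in>F. f y0 \<le> f y"
    using F(2) by (metis arg_min_if_finite(1) arg_min_if_finite(2) not_le)
  then have "y0 \<in> K" using F by auto
  then obtain y where "y \<in> F" "f y < f y0" using F(3) by auto
  then show False using y0 by auto
qed

lemma lsc_diff:
  fixes u w :: "'a::topological_space \<Rightarrow> real"
  assumes u: "lsc u" and w: "continuous_on UNIV w"
  shows "open {x. a < u x - w x}"
proof -
  have "{x. a < u x - w x} = (\<Union>q. {x. q < u x} \<inter> {x. w x < q - a})"
  proof (intro equalityI subsetI)
    fix x assume "x \<in> {x. a < u x - w x}"
    then show "x \<in> (\<Union>q. {x. q < u x} \<inter> {x. w x < q - a})"
      by (intro UN_I[of "(u x + w x + a)/2"]) auto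
  qed auto
  moreover have "open ({x. q < u x} \<inter> {x. w x < q - a})" for q
    using u w by (intro open_Int) (auto simp: lsc_def intro: open_Collect_less continuous_intros)
  ultimately show ?thesis by auto
qed

lemma compare_annulus:
  fixes u w :: "real^'n \<Rightarrow> real"
  assumes u: "lsc u" and w: "continuous_on UNIV w" and R: "R1 \<le> R3"
    and bd: "\<And>x. norm x = R1 \<or> norm x = R3 \<Longrightarrow> w x \<le> u x"
    and nt: "\<And>x0. R1 < norm x0 \<Longrightarrow> norm x0 < R3 \<Longrightarrow> \<not> (\<forall>\<^sub>F x in at x0. u x - w x \<ge> u x0 - w x0)"
    and x: "R1 \<le> norm x" "norm x \<le> R3"
  shows "w x \<le> u x"
proof -
  define K where "K = cball (0::real^'n) R3 - ball 0 R1"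
  have K: "K = {y. R1 \<le> norm y \<and> norm y \<le> R3}" by (auto simp: K_def)
  have "compact K" unfolding K_def by (intro compact_diff compact_cball open_ball)
  moreover have "x \<in> K" using x by (simp add: K)
  ultimately obtain x0 where x0: "x0 \<in> K" "\<forall>y\<in>K. u x0 - w x0 \<le> u y - w y"
    using lsc_attains_min[of "\<lambda>y. u y - w y" K] lsc_diff[OF u w] by blast
  show ?thesis
  proof (cases "u x0 - w x0 \<ge> 0")
    case True then show ?thesis using x0 \<open>x \<in> K\<close> by force
  next
    case False
    then have "norm x0 \<noteq> R1" "norm x0 \<noteq> R3" using bd[of x0] by auto
    then have i: "R1 < norm x0" "norm x0 < R3" using x0 by (auto simp: K)
    define U where "U = {y::real^'n. R1 < norm y} \<inter> {y. norm y < R3}"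
    have "open U" unfolding U_def by (intro open_Int open_Collect_less continuous_intros)
    moreover have "x0 \<in> U" using i by (simp add: U_def)
    ultimately have "\<forall>\<^sub>F y in at x0. y \<in> U"
      using eventually_at_topological by blast
    then have "\<forall>\<^sub>F y in at x0. u y - w y \<ge> u x0 - w x0"
      by eventually_elim (use x0 in \<open>auto simp: U_def K\<close>)
    then show ?thesis using nt[OF i] by blast
  qed
qed

lemma no_touch:
  fixes u F :: "real^'n \<Rightarrow> real" and x0 :: "real^'n"
  assumes vs: "visc_super (\<lambda>x r p M. pucci_max l L M - F p) u"
    and a: "a > 0" and nu: "\<nu> > 0" and e: "\<epsilon> > 0" and l: "0 < l" "l \<le> L" and x0: "x0 \<noteq> 0"
    and es: "\<epsilon> \<le> (\<nu> + 1) * (x0 \<bullet> x0)"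
    and strict: "a * \<nu> * (x0 \<bullet> x0 + \<epsilon>) powr (-\<nu>/2 - 2) *
        ((x0 \<bullet> x0) * ((real CARD('n) - 1) * L - (\<nu> + 1) * l) + \<epsilon> * (l + (real CARD('n) - 1) * L))
        < F ((2 * (a * (-\<nu>/2) * (x0 \<bullet> x0 + \<epsilon>) powr (-\<nu>/2 - 1))) *\<^sub>R x0)"
  shows "\<not> (\<forall>\<^sub>F x in at x0. u x - a * ((x \<bullet> x + \<epsilon>) powr (-\<nu>/2) - C) \<ge> u x0 - a * ((x0 \<bullet> x0 + \<epsilon>) powr (-\<nu>/2) - C))"
proof
  assume ev: "\<forall>\<^sub>F x in at x0. u x - a * ((x \<bullet> x + \<epsilon>) powr (-\<nu>/2) - C) \<ge> u x0 - a * ((x0 \<bullet> x0 + \<epsilon>) powr (-\<nu>/2) - C)"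
  have c2: "C2_with (\<lambda>x::real^'n. (\<lambda>t. a * ((t + \<epsilon>) powr (-\<nu>/2) - C)) (x \<bullet> x))
     (\<lambda>x. (2 * (\<lambda>t. a * (-\<nu>/2) * (t + \<epsilon>) powr (-\<nu>/2 - 1)) (x \<bullet> x)) *\<^sub>R x)
     (\<lambda>x. \<chi> i j. 2 * (\<lambda>t. a * (-\<nu>/2) * (t + \<epsilon>) powr (-\<nu>/2 - 1)) (x \<bullet> x) * (if i = j then 1 else 0)
        + 4 * (\<lambda>t. a * (-\<nu>/2) * (-\<nu>/2 - 1) * (t + \<epsilon>) powr (-\<nu>/2 - 2)) (x \<bullet> x) * x$i * x$j)"
    by (rule radial_C2) (use G_derivs[OF e] in auto)
  have "pucci_max l L (\<chi> i j. 2 * (a * (-\<nu>/2) * (x0 \<bullet> x0 + \<epsilon>) powr (-\<nu>/2 - 1)) * (if i = j then 1 else 0)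
            + 4 * (a * (-\<nu>/2) * (-\<nu>/2 - 1) * (x0 \<bullet> x0 + \<epsilon>) powr (-\<nu>/2 - 2)) * x0$i * x0$j)
        - F ((2 * (a * (-\<nu>/2) * (x0 \<bullet> x0 + \<epsilon>) powr (-\<nu>/2 - 1))) *\<^sub>R x0) \<ge> 0"
    using vs c2 ev unfolding visc_super_def by blast
  then show False using w_bound[OF a nu e l x0 es] strict by linarith
qed


lemma bm_le: assumes "\<And>x. u x \<ge> 0" "norm x \<le> R" shows "ball_min u R \<le> u x"
  unfolding ball_min_def using assms by (intro cInf_lower) (auto intro!: bdd_belowI[of _ 0])

lemma bm_ge: assumes "R \<ge> 0" "\<And>x. norm x \<le> R \<Longrightarrow> c \<le> u x" shows "c \<le> ball_min u R"
  unfolding ball_min_def using assms by (intro cInf_greatest) auto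

lemma bm_nonneg: assumes "\<And>x. u x \<ge> 0" "R \<ge> 0" shows "0 \<le> ball_min u R"
  using assms by (intro bm_ge) auto

lemma bm_anti: assumes "\<And>x. u x \<ge> 0" "0 \<le> R1" "R1 \<le> R2" shows "ball_min u R2 \<le> ball_min u R1"
  using assms by (intro bm_ge) (auto intro: bm_le)

lemma comp_step:
  fixes u F :: "real^'n \<Rightarrow> real"
  assumes vs: "visc_super (\<lambda>x r p M. pucci_max l L M - F p) u"
    and u0: "\<And>x. u x \<ge> 0" and u: "lsc u" and l: "0 < l" "l \<le> L"
    and nu: "\<nu> > 0" and e: "\<epsilon> > 0" and R: "0 < R1" "R1 \<le> R2" "R2 < R3"
    and m1: "ball_min u R1 > 0" and es: "\<epsilon> \<le> (\<nu> + 1) * R1\<^sup>2"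
    and adef: "a = ball_min u R1 / ((R1\<^sup>2 + \<epsilon>) powr (-\<nu>/2) - (R3\<^sup>2 + \<epsilon>) powr (-\<nu>/2))"
    and strict: "\<And>x0::real^'n. R1 < norm x0 \<Longrightarrow> norm x0 < R3 \<Longrightarrow>
        a * \<nu> * (x0 \<bullet> x0 + \<epsilon>) powr (-\<nu>/2 - 2) *
        ((x0 \<bullet> x0) * ((real CARD('n) - 1) * L - (\<nu> + 1) * l) + \<epsilon> * (l + (real CARD('n) - 1) * L))
        < F ((2 * (a * (-\<nu>/2) * (x0 \<bullet> x0 + \<epsilon>) powr (-\<nu>/2 - 1))) *\<^sub>R x0)"
  shows "ball_min u R1 * ((R2\<^sup>2 + \<epsilon>) powr (-\<nu>/2) - (R3\<^sup>2 + \<epsilon>) powr (-\<nu>/2))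
           / ((R1\<^sup>2 + \<epsilon>) powr (-\<nu>/2) - (R3\<^sup>2 + \<epsilon>) powr (-\<nu>/2)) \<le> ball_min u R2"
proof -
  define C where "C = (R3\<^sup>2 + \<epsilon>) powr (-\<nu>/2)"
  define D where "D = (\<lambda>r::real. (r\<^sup>2 + \<epsilon>) powr (-\<nu>/2))"
  define w where "w = (\<lambda>x::real^'n. a * ((x \<bullet> x + \<epsilon>) powr (-\<nu>/2) - C))"
  have Dmono: "D r2 \<le> D r1" if "0 \<le> r1" "r1 \<le> r2" for r1 r2
    unfolding D_def using that e nu by (intro powr_mono2') (auto intro: power_mono add_nonneg_pos)
  have DC: "C < D R1" unfolding C_def D_def using R e nu
    by (intro powr_less_mono2_neg) (auto intro: power_strict_mono add_nonneg_pos)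
  have a: "a > 0" using adef m1 DC by (simp add: C_def D_def)
  have wx: "w x = a * (D (norm x) - C)" for x by (simp add: w_def D_def power2_norm_eq_inner)
  have wR1: "a * (D R1 - C) = ball_min u R1" using adef DC by (simp add: C_def D_def)
  have cw: "continuous_on UNIV w" unfolding w_def using e
    by (intro continuous_intros) (metis add_nonneg_pos inner_ge_zero order_less_irrefl)
  have cmp: "w x \<le> u x" if "R1 \<le> norm x" "norm x \<le> R3" for x
  proof (rule compare_annulus[OF u cw _ _ _ that])
    show "R1 \<le> R3" using R by simp
  next
    fix x :: "real^'n" assume "norm x = R1 \<or> norm x = R3"
    then show "w x \<le> u x"
    proof
      assume "norm x = R1" then show ?thesis using wR1 bm_le[OF u0, of x R1] by (simp add: wx)
    next
      assume "norm x = R3" then show ?thesis using u0[of x] by (simp add: wx C_def D_def)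
    qed
  next
    fix x0 :: "real^'n" assume x0: "R1 < norm x0" "norm x0 < R3"
    have "x0 \<noteq> 0" using x0 R by auto
    moreover have "\<epsilon> \<le> (\<nu> + 1) * (x0 \<bullet> x0)"
    proof -
      have "R1\<^sup>2 \<le> (norm x0)\<^sup>2" using x0 R by (intro power_mono) auto
      then have "(\<nu> + 1) * R1\<^sup>2 \<le> (\<nu> + 1) * (x0 \<bullet> x0)" using nu by (simp add: power2_norm_eq_inner)
      then show ?thesis using es by simp
    qed
    ultimately show "\<not> (\<forall>\<^sub>F x in at x0. u x - w x \<ge> u x0 - w x0)"
      unfolding w_def using no_touch[OF vs a nu e l _ _ strict[OF x0], of C] by blast
  qed
  have "a * (D R2 - C) \<le> ball_min u R2"
  proof (rule bm_ge)
    show "0 \<le> R2" using R by simp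
  next
    fix x :: "real^'n" assume x: "norm x \<le> R2"
    show "a * (D R2 - C) \<le> u x"
    proof (cases "norm x \<le> R1")
      case True
      have "a * (D R2 - C) \<le> a * (D R1 - C)" using a Dmono[of R1 R2] R by (intro mult_left_mono) auto
      also have "\<dots> \<le> u x" using wR1 bm_le[OF u0 True] by simp
      finally show ?thesis .
    next
      case False
      have "a * (D R2 - C) \<le> a * (D (norm x) - C)" using a Dmono[of "norm x" R2] x by (intro mult_left_mono) auto
      also have "\<dots> \<le> u x" using cmp[of x] False x R by (simp add: wx)
      finally show ?thesis .
    qed
  qed
  then show ?thesis using adef by (simp add: C_def D_def)
qed

lemma sq_powr0: fixes r \<nu> :: real shows "r > 0 \<Longrightarrow> (r\<^sup>2) powr (-\<nu>/2) = r powr (-\<nu>)"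
proof -
  assume r: "r > 0"
  have a: "r powr 2 = r\<^sup>2" using r by (simp add: powr_numeral)
  have b: "(r powr 2) powr (-\<nu>/2) = r powr (-\<nu>)" unfolding powr_powr by simp
  show ?thesis using b unfolding a .
qed

lemma sq_powr: fixes r \<nu> :: real shows "r > 0 \<Longrightarrow> (r\<^sup>2) powr (-\<nu>/2) = r powr (-\<nu>)"
  "r > 0 \<Longrightarrow> (r\<^sup>2) powr (-(\<nu>/2)) = r powr (-\<nu>)"
  using sq_powr0[of r \<nu>] by simp_all

lemma limit_eps_R3:
  fixes m1 m2 :: real
  assumes nu: "\<nu> > 0" and R: "0 < R1" "R1 \<le> R2"
    and H: "\<And>R3. R3 > R2 \<Longrightarrow> \<forall>\<^sub>F \<epsilon> in at_right 0.
       m1 * ((R2\<^sup>2 + \<epsilon>) powr (-\<nu>/2) - (R3\<^sup>2 + \<epsilon>) powr (-\<nu>/2))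
           / ((R1\<^sup>2 + \<epsilon>) powr (-\<nu>/2) - (R3\<^sup>2 + \<epsilon>) powr (-\<nu>/2)) \<le> m2"
  shows "m1 * R2 powr (-\<nu>) / R1 powr (-\<nu>) \<le> m2"
proof -
  have step: "m1 * (R2 powr (-\<nu>) - R3 powr (-\<nu>)) / (R1 powr (-\<nu>) - R3 powr (-\<nu>)) \<le> m2" if R3: "R3 > R2" for R3
  proof -
    have ne: "R1 powr (-\<nu>) - R3 powr (-\<nu>) \<noteq> 0"
      using R R3 nu powr_less_mono2_neg[of "-\<nu>" R1 R3] by auto
    have "((\<lambda>\<epsilon>. m1 * ((R2\<^sup>2 + \<epsilon>) powr (-\<nu>/2) - (R3\<^sup>2 + \<epsilon>) powr (-\<nu>/2))
           / ((R1\<^sup>2 + \<epsilon>) powr (-\<nu>/2) - (R3\<^sup>2 + \<epsilon>) powr (-\<nu>/2)))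
       \<longlongrightarrow> m1 * ((R2\<^sup>2 + 0) powr (-\<nu>/2) - (R3\<^sup>2 + 0) powr (-\<nu>/2))
           / ((R1\<^sup>2 + 0) powr (-\<nu>/2) - (R3\<^sup>2 + 0) powr (-\<nu>/2))) (at_right 0)"
      using R R3 ne by (intro tendsto_intros) (auto simp: sq_powr)
    then show ?thesis
      using R R3 by (intro tendsto_le[OF _ tendsto_const _ H[OF R3]]) (auto simp: sq_powr)
  qed
  have "((\<lambda>R3. m1 * (R2 powr (-\<nu>) - R3 powr (-\<nu>)) / (R1 powr (-\<nu>) - R3 powr (-\<nu>)))
      \<longlongrightarrow> m1 * (R2 powr (-\<nu>) - 0) / (R1 powr (-\<nu>) - 0)) at_top"
    using R nu by (intro tendsto_intros tendsto_neg_powr filterlim_ident) auto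
  moreover have "\<forall>\<^sub>F R3 in at_top. m1 * (R2 powr (-\<nu>) - R3 powr (-\<nu>)) / (R1 powr (-\<nu>) - R3 powr (-\<nu>)) \<le> m2"
    using eventually_gt_at_top[of R2] by eventually_elim (rule step)
  ultimately show ?thesis
    by (intro tendsto_le[OF _ tendsto_const]) auto
qed

lemma ineq_rhs:
  fixes A S T \<theta> \<gamma> \<nu> :: real
  assumes A: "A > 0" and S: "S > 0" and ST: "S \<le> T" and T: "T \<le> (1 + \<theta>) * S" and th: "\<theta> \<ge> 0"
    and g: "\<gamma> > 1" and nu: "\<nu> > 0"
  shows "A * S powr (-\<nu>/2 - 1) * (A powr (\<gamma> - 1) * S powr (\<nu>/2 + 1 - (\<nu>/2 + 1) * \<gamma> + \<gamma>/2)
            * (1 + \<theta>) powr (-((\<nu>/2 + 1) * \<gamma>)))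
         \<le> (A * T powr (-\<nu>/2 - 1) * sqrt S) powr \<gamma>"
proof -
  define k where "k = (\<nu>/2 + 1) * \<gamma>"
  have Tp: "T > 0" using S ST by simp
  have "(A * T powr (-\<nu>/2 - 1) * sqrt S) powr \<gamma> = A powr \<gamma> * T powr (-k) * S powr (\<gamma>/2)"
  proof -
    have "(A * T powr (-\<nu>/2 - 1) * sqrt S) powr \<gamma> = A powr \<gamma> * (T powr (-\<nu>/2 - 1)) powr \<gamma> * (sqrt S) powr \<gamma>"
      using A Tp S by (simp add: powr_mult)
    moreover have "(T powr (-\<nu>/2 - 1)) powr \<gamma> = T powr (-k)"
    proof -
      have "(-\<nu>/2 - 1) * \<gamma> = -k" by (simp add: k_def algebra_simps)
      then show ?thesis by (simp add: powr_powr)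
    qed
    moreover have "(sqrt S) powr \<gamma> = S powr (\<gamma>/2)"
      using S by (simp add: powr_half_sqrt[symmetric] powr_powr)
    ultimately show ?thesis by simp
  qed
  moreover have "((1 + \<theta>) * S) powr (-k) \<le> T powr (-k)"
    using Tp T g nu by (intro powr_mono2') (auto simp: k_def)
  moreover have "((1 + \<theta>) * S) powr (-k) = (1 + \<theta>) powr (-k) * S powr (-k)"
    using th S by (simp add: powr_mult)
  moreover have "A * S powr (-\<nu>/2 - 1) * (A powr (\<gamma> - 1) * S powr (\<nu>/2 + 1 - k + \<gamma>/2) * (1 + \<theta>) powr (-k))
      = A powr \<gamma> * ((1 + \<theta>) powr (-k) * S powr (-k)) * S powr (\<gamma>/2)"
  proof -
    have "A * A powr (\<gamma> - 1) = A powr \<gamma>" using A by (simp add: powr_diff)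
    moreover have "S powr (-\<nu>/2 - 1) * S powr (\<nu>/2 + 1 - k + \<gamma>/2) = S powr (-k) * S powr (\<gamma>/2)"
      using S by (simp add: powr_add[symmetric])
    moreover have "A * S powr (-\<nu>/2 - 1) * (A powr (\<gamma> - 1) * S powr (\<nu>/2 + 1 - k + \<gamma>/2) * (1 + \<theta>) powr (-k))
       = (A * A powr (\<gamma> - 1)) * (S powr (-\<nu>/2 - 1) * S powr (\<nu>/2 + 1 - k + \<gamma>/2)) * (1 + \<theta>) powr (-k)"
      by (simp only: mult_ac)
    ultimately show ?thesis by (simp only: mult_ac)
  qed
  ultimately have "A * S powr (-\<nu>/2 - 1) * (A powr (\<gamma> - 1) * S powr (\<nu>/2 + 1 - k + \<gamma>/2) * (1 + \<theta>) powr (-k))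
      \<le> (A * T powr (-\<nu>/2 - 1) * sqrt S) powr \<gamma>"
    by (simp only:) (intro mult_right_mono mult_left_mono; simp)
  then show ?thesis by (simp only: k_def)
qed

lemma ineq_lhs:
  fixes A S T X Bc \<nu> :: real
  assumes A: "A > 0" and S: "S > 0" and ST: "S \<le> T" and X: "X \<le> S * Bc" and Bc: "Bc \<ge> 0" and nu: "\<nu> > 0"
  shows "A * T powr (-\<nu>/2 - 2) * X \<le> A * S powr (-\<nu>/2 - 1) * Bc"
proof -
  have Tp: "T > 0" using S ST by simp
  have "A * T powr (-\<nu>/2 - 2) * X \<le> A * T powr (-\<nu>/2 - 2) * (S * Bc)"
    using A X by (intro mult_left_mono) auto
  also have "\<dots> \<le> A * S powr (-\<nu>/2 - 2) * (S * Bc)"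
    using A S Bc ST nu by (intro mult_right_mono mult_left_mono powr_mono2') auto
  also have "\<dots> = A * (S powr (-\<nu>/2 - 2) * S powr 1) * Bc" using S by (simp add: mult_ac)
  also have "\<dots> = A * S powr (-\<nu>/2 - 2 + 1) * Bc" using S by (simp only: powr_add)
  also have "\<dots> = A * S powr (-\<nu>/2 - 1) * Bc"
  proof -
    have "-\<nu>/2 - 2 + 1 = -\<nu>/2 - (1::real)" by simp
    then show ?thesis by (simp only:)
  qed
  finally show ?thesis .
qed

lemma ineq_low:
  fixes A S R1 m1 \<gamma> \<nu> :: real
  assumes A: "\<nu> * m1 * R1 powr \<nu> \<le> A" and m1: "m1 > 0" and R1: "R1 > 0" and S: "R1\<^sup>2 \<le> S"
    and g: "\<gamma> > 1" and nu: "\<nu> > 0" and e: "\<nu>/2 + 1 - (\<nu>/2 + 1) * \<gamma> + \<gamma>/2 \<ge> 0"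
  shows "(\<nu> * m1) powr (\<gamma> - 1) * R1 powr (2 - \<gamma>) \<le> A powr (\<gamma> - 1) * S powr (\<nu>/2 + 1 - (\<nu>/2 + 1) * \<gamma> + \<gamma>/2)"
proof -
  define e where "e = \<nu>/2 + 1 - (\<nu>/2 + 1) * \<gamma> + \<gamma>/2"
  have e0: "e \<ge> 0" using e by (simp add: e_def)
  have p: "\<nu> * m1 * R1 powr \<nu> > 0" using m1 R1 nu by simp
  have "(\<nu> * m1 * R1 powr \<nu>) powr (\<gamma> - 1) \<le> A powr (\<gamma> - 1)"
    using A p g by (intro powr_mono2) auto
  moreover have "(R1\<^sup>2) powr e \<le> S powr e" using S e0 by (intro powr_mono2) auto
  moreover have "(\<nu> * m1 * R1 powr \<nu>) powr (\<gamma> - 1) * (R1\<^sup>2) powr e = (\<nu> * m1) powr (\<gamma> - 1) * R1 powr (2 - \<gamma>)"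
  proof -
    have r2: "R1\<^sup>2 = R1 powr 2" using R1 by (simp add: powr_numeral)
    have "(\<nu> * m1 * R1 powr \<nu>) powr (\<gamma> - 1) = (\<nu> * m1) powr (\<gamma> - 1) * R1 powr (\<nu> * (\<gamma> - 1))"
      using m1 R1 nu by (simp add: powr_mult powr_powr)
    moreover have "(R1\<^sup>2) powr e = R1 powr (2 * e)" unfolding r2 powr_powr by simp
    moreover have "R1 powr (\<nu> * (\<gamma> - 1)) * R1 powr (2 * e) = R1 powr (2 - \<gamma>)"
    proof -
      have "\<nu> * (\<gamma> - 1) + 2 * e = 2 - \<gamma>" by (simp add: e_def algebra_simps)
      then show ?thesis by (simp add: powr_add[symmetric])
    qed
    ultimately show ?thesis by (simp add: mult_ac)
  qed
  ultimately show ?thesis using p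
    by (metis e_def mult_mono powr_ge_zero)
qed


lemma e_nonneg:
  fixes \<beta> \<gamma> \<nu> :: real
  assumes b2: "\<beta> > 2" and g: "\<gamma> \<le> \<beta> / (\<beta> - 1)" and nu: "0 < \<nu>" "\<nu> < \<beta> - 2"
  shows "\<nu>/2 + 1 - (\<nu>/2 + 1) * \<gamma> + \<gamma>/2 \<ge> 0"
proof -
  have "\<gamma> * (\<beta> - 1) \<le> \<beta>" using g b2 by (simp add: pos_le_divide_eq)
  then have "\<gamma> * (\<beta> - 1) * (\<nu> + 1) \<le> \<beta> * (\<nu> + 1)" using nu by (intro mult_right_mono) auto
  moreover have "\<beta> * (\<nu> + 1) \<le> (\<nu> + 2) * (\<beta> - 1)" using nu by (simp add: algebra_simps)
  ultimately have "(\<gamma> * (\<nu> + 1)) * (\<beta> - 1) \<le> (\<nu> + 2) * (\<beta> - 1)" by (simp add: mult_ac)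
  then have "\<gamma> * (\<nu> + 1) \<le> \<nu> + 2" using b2 by simp
  then show ?thesis by (simp add: algebra_simps)
qed

lemma core2:
  fixes u :: "real^'n \<Rightarrow> real"
  assumes l: "0 < l" "l \<le> L" and u0: "\<And>x. u x \<ge> 0" and u: "lsc u"
    and vs: "visc_super (\<lambda>x r p M. pucci_max l L M - norm p powr \<gamma>) u"
    and bdef: "\<beta> = L / l * (real CARD('n) - 1) + 1"
    and g: "1 < \<gamma>" "\<gamma> \<le> \<beta> / (\<beta> - 1)" and b2: "\<beta> > 2"
    and nu: "0 < \<nu>" "\<nu> < \<beta> - 2" and R1: "R1 > 0" and m1: "ball_min u R1 > 0"
    and Q: "l * (\<beta> - 2 - \<nu>) < (\<nu> * ball_min u R1) powr (\<gamma> - 1) * R1 powr (2 - \<gamma>)"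
    and R12: "R1 \<le> R2"
  shows "ball_min u R1 * R1 powr \<nu> \<le> ball_min u R2 * R2 powr \<nu>"
proof -
  define m1 where "m1 = ball_min u R1"
  define m2 where "m2 = ball_min u R2"
  define b where "b = (real CARD('n) - 1) * L - (\<nu> + 1) * l"
  define c where "c = l + (real CARD('n) - 1) * L"
  define k where "k = (\<nu>/2 + 1) * \<gamma>"
  define e where "e = \<nu>/2 + 1 - (\<nu>/2 + 1) * \<gamma> + \<gamma>/2"
  define Qv where "Qv = (\<nu> * m1) powr (\<gamma> - 1) * R1 powr (2 - \<gamma>)"
  have bb: "b = l * (\<beta> - 2 - \<nu>)" unfolding b_def bdef using l by (simp add: field_simps)
  have bpos: "b > 0" using bb l nu by simp
  have cpos: "c > 0" using l by (simp add: c_def add_pos_nonneg)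
  have e0: "e \<ge> 0" unfolding e_def using e_nonneg[OF b2 g(2) nu] .
  have bQ: "b < Qv" using Q bb by (simp add: Qv_def m1_def)
  have m1p: "m1 > 0" using m1 by (simp add: m1_def)
  define K where "K = (\<lambda>\<epsilon>. (b + c * (\<epsilon> / R1\<^sup>2)) * (1 + \<epsilon> / R1\<^sup>2) powr k)"
  have "(K \<longlongrightarrow> (b + c * (0 / R1\<^sup>2)) * (1 + 0 / R1\<^sup>2) powr k) (at_right 0)"
    unfolding K_def using R1 by (intro tendsto_intros) auto
  then have "(K \<longlongrightarrow> b) (at_right 0)" by simp
  then have evK: "\<forall>\<^sub>F \<epsilon> in at_right 0. K \<epsilon> < Qv" using bQ by (rule order_tendstoD)
  have ev2: "\<forall>\<^sub>F \<epsilon> in at_right 0. 0 < \<epsilon> \<and> \<epsilon> < R1\<^sup>2"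
    using R1 by (auto simp: eventually_at_right_field intro!: exI[of _ "R1\<^sup>2"])
  have key: "m1 * R2 powr (-\<nu>) / R1 powr (-\<nu>) \<le> m2"
  proof (rule limit_eps_R3)
    show "\<nu> > 0" "0 < R1" "R1 \<le> R2" using nu R1 R12 by auto
  next
    fix R3 assume R3: "R3 > R2"
    show "\<forall>\<^sub>F \<epsilon> in at_right 0.
       m1 * ((R2\<^sup>2 + \<epsilon>) powr (-\<nu>/2) - (R3\<^sup>2 + \<epsilon>) powr (-\<nu>/2))
           / ((R1\<^sup>2 + \<epsilon>) powr (-\<nu>/2) - (R3\<^sup>2 + \<epsilon>) powr (-\<nu>/2)) \<le> m2"
      using evK ev2
    proof eventually_elim
      case (elim \<epsilon>)
      then have e: "\<epsilon> > 0" "\<epsilon> < R1\<^sup>2" and Ke: "K \<epsilon> < Qv" by auto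
      define \<theta> where "\<theta> = \<epsilon> / R1\<^sup>2"
      have th: "\<theta> \<ge> 0" using e by (simp add: \<theta>_def)
      have "0 \<le> \<nu> * R1\<^sup>2" using nu by simp
      then have ee: "\<epsilon> \<le> (\<nu> + 1) * R1\<^sup>2" using e by (simp add: algebra_simps)
      define D1 where "D1 = (R1\<^sup>2 + \<epsilon>) powr (-\<nu>/2)"
      define C where "C = (R3\<^sup>2 + \<epsilon>) powr (-\<nu>/2)"
      define a where "a = m1 / (D1 - C)"
      have DC: "C < D1" unfolding C_def D1_def using R1 R12 R3 e nu
        by (intro powr_less_mono2_neg) (auto intro: power_strict_mono add_nonneg_pos)
      have "R3\<^sup>2 + \<epsilon> > 0" using e by (simp add: add_nonneg_pos)
      then have Cp: "C > 0" by (simp add: C_def)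
      have apos: "a > 0" using m1p DC by (simp add: a_def)
      have pos: "0 < D1 * (D1 - C)" using DC Cp by (intro mult_pos_pos) auto
      have DD: "D1 - C \<le> D1" using Cp by simp
      have m1n: "0 \<le> m1" using m1p by simp
      have aD: "m1 / D1 \<le> a" unfolding a_def by (rule divide_left_mono[OF DD m1n pos])
      have "D1 = inverse ((R1\<^sup>2 + \<epsilon>) powr (\<nu>/2))" unfolding D1_def
        using powr_minus[of "R1\<^sup>2 + \<epsilon>" "\<nu>/2"] by simp
      then have D1inv: "1 / D1 = (R1\<^sup>2 + \<epsilon>) powr (\<nu>/2)" by (simp only: divide_inverse inverse_inverse_eq mult_1)
      have "R1 powr \<nu> \<le> (R1\<^sup>2 + \<epsilon>) powr (\<nu>/2)"
      proof -
        have "R1 powr \<nu> = (R1\<^sup>2) powr (\<nu>/2)" using R1 sq_powr0[of R1 "-\<nu>"] by simp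
        also have "\<dots> \<le> (R1\<^sup>2 + \<epsilon>) powr (\<nu>/2)" using e nu by (intro powr_mono2) auto
        finally show ?thesis .
      qed
      then have "m1 * R1 powr \<nu> \<le> m1 * (1 / D1)" using m1p D1inv by (intro mult_left_mono) auto
      also have "\<dots> \<le> a" using aD by simp
      finally have Alow: "\<nu> * m1 * R1 powr \<nu> \<le> a * \<nu>"
        using nu by (simp add: mult_ac mult_left_mono)
      show ?case unfolding m1_def m2_def
      proof (rule comp_step[OF vs u0 u l nu(1) e(1) R1 R12 R3 m1 ee])
        show "a = ball_min u R1 / ((R1\<^sup>2 + \<epsilon>) powr (-\<nu>/2) - (R3\<^sup>2 + \<epsilon>) powr (-\<nu>/2))"
          by (simp add: a_def m1_def D1_def C_def)
      next
        fix x0 :: "real^'n" assume x0: "R1 < norm x0" "norm x0 < R3"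
        define S where "S = x0 \<bullet> x0"
        have SR: "R1\<^sup>2 \<le> S" using x0 R1 power_mono[of R1 "norm x0" 2] by (simp add: power2_norm_eq_inner S_def)
        have "R1\<^sup>2 > 0" using R1 by simp
        then have Sp: "S > 0" using SR by linarith
        have "1 \<le> S / R1\<^sup>2" using SR R1 by simp
        then have "\<epsilon> * 1 \<le> \<epsilon> * (S / R1\<^sup>2)" using e by (intro mult_left_mono) auto
        then have eS: "\<epsilon> \<le> \<theta> * S" unfolding \<theta>_def by simp
        have T1: "S \<le> S + \<epsilon>" "S + \<epsilon> \<le> (1 + \<theta>) * S" using e eS by (auto simp: algebra_simps)
        have X: "S * b + \<epsilon> * c \<le> S * (b + \<theta> * c)" using eS cpos by (simp add: algebra_simps mult_right_mono)
        have Bc: "b + \<theta> * c \<ge> 0" using bpos cpos th by simp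
        have lhs: "(a * \<nu>) * (S + \<epsilon>) powr (-\<nu>/2 - 2) * (S * b + \<epsilon> * c) \<le> (a * \<nu>) * S powr (-\<nu>/2 - 1) * (b + \<theta> * c)"
          using apos nu by (intro ineq_lhs[OF _ Sp T1(1) X Bc nu(1)]) simp
        have low: "Qv \<le> (a * \<nu>) powr (\<gamma> - 1) * S powr e"
          unfolding Qv_def e_def using ineq_low[OF Alow m1p R1 SR g(1) nu(1)] e0 by (simp add: e_def)
        have Kt: "K \<epsilon> = (b + \<theta> * c) * (1 + \<theta>) powr k" by (simp add: K_def \<theta>_def mult_ac)
        have pk: "(1 + \<theta>) powr k > 0" using th by simp
        have mid: "b + \<theta> * c < (a * \<nu>) powr (\<gamma> - 1) * S powr e * (1 + \<theta>) powr (-k)"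
        proof -
          have "(b + \<theta> * c) * (1 + \<theta>) powr k < (a * \<nu>) powr (\<gamma> - 1) * S powr e" using Ke low Kt by simp
          then have "b + \<theta> * c < (a * \<nu>) powr (\<gamma> - 1) * S powr e / (1 + \<theta>) powr k"
            using pk by (simp add: pos_less_divide_eq)
          then show ?thesis by (simp add: powr_minus divide_inverse)
        qed
        have Sp2: "S powr (-\<nu>/2 - 1) > 0" using Sp by simp
        have "(a * \<nu>) * S powr (-\<nu>/2 - 1) * (b + \<theta> * c)
            < (a * \<nu>) * S powr (-\<nu>/2 - 1) * ((a * \<nu>) powr (\<gamma> - 1) * S powr e * (1 + \<theta>) powr (-k))"
          using mid apos nu Sp2 by (intro mult_strict_left_mono) auto
        also have "\<dots> \<le> ((a * \<nu>) * (S + \<epsilon>) powr (-\<nu>/2 - 1) * sqrt S) powr \<gamma>"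
          using ineq_rhs[OF _ Sp T1 th g(1) nu(1), of "a * \<nu>"] apos nu by (simp add: e_def k_def)
        also have "\<dots> = norm ((2 * (a * (-\<nu>/2) * (x0 \<bullet> x0 + \<epsilon>) powr (-\<nu>/2 - 1))) *\<^sub>R x0) powr \<gamma>"
        proof -
          have "x0 \<bullet> x0 + \<epsilon> > 0" using e by (simp add: add_nonneg_pos)
          then have P'p: "(x0 \<bullet> x0 + \<epsilon>) powr (-\<nu>/2 - 1) > 0" by simp
          have "\<bar>2 * (a * (-\<nu>/2) * (x0 \<bullet> x0 + \<epsilon>) powr (-\<nu>/2 - 1))\<bar> = a * \<nu> * (x0 \<bullet> x0 + \<epsilon>) powr (-\<nu>/2 - 1)"
            using apos nu P'p by (simp add: abs_mult)
          then show ?thesis by (subst norm_scaleR) (simp only: norm_eq_sqrt_inner S_def)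
        qed
        finally show "a * \<nu> * (x0 \<bullet> x0 + \<epsilon>) powr (-\<nu>/2 - 2) *
          ((x0 \<bullet> x0) * ((real CARD('n) - 1) * L - (\<nu> + 1) * l) + \<epsilon> * (l + (real CARD('n) - 1) * L))
          < norm ((2 * (a * (-\<nu>/2) * (x0 \<bullet> x0 + \<epsilon>) powr (-\<nu>/2 - 1))) *\<^sub>R x0) powr \<gamma>"
          using lhs by (simp add: S_def b_def c_def)
      qed
    qed
  qed
  moreover have "m1 * R2 powr (-\<nu>) / R1 powr (-\<nu>) = m1 * R1 powr \<nu> / R2 powr \<nu>"
    unfolding powr_minus by (simp add: divide_inverse)
  ultimately have "m1 * R1 powr \<nu> / R2 powr \<nu> \<le> m2" by simp
  then have "m1 * R1 powr \<nu> \<le> m2 * R2 powr \<nu>"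
    using R1 R12 by (simp add: pos_divide_le_eq)
  then show ?thesis unfolding m1_def m2_def .
qed


lemma beta_rel: "0 < l \<Longrightarrow> l * (L / l * (N - 1) + 1 - 2 - \<nu>) = (N - 1) * L - (\<nu> + 1) * (l::real)"
  by (simp add: field_simps)

lemma part1:
  fixes u :: "real^'n \<Rightarrow> real"
  assumes l: "0 < l" "l \<le> L" and hb: "L / l * (real CARD('n) - 1) + 1 > 2"
    and u0: "\<And>x. u x \<ge> 0" and u: "lsc u"
    and vs0: "visc_super (\<lambda>x r p M. pucci_max l L M) u"
  shows "mono_on {0<..} (\<lambda>R. ball_min u R * R powr (L / l * (real CARD('n) - 1) + 1 - 2))"
proof (rule mono_onI)
  define \<beta> where "\<beta> = L / l * (real CARD('n) - 1) + 1"
  have b2: "\<beta> > 2" using hb by (simp add: \<beta>_def)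
  have vs: "visc_super (\<lambda>x r p M. pucci_max l L M - (\<lambda>p. 0) p) u" using vs0 by simp
  fix R1 R2 :: real assume R1: "R1 \<in> {0<..}" and R2: "R2 \<in> {0<..}" and R12: "R1 \<le> R2"
  define m1 where "m1 = ball_min u R1"
  define m2 where "m2 = ball_min u R2"
  have m1p: "m1 \<ge> 0" "m2 \<ge> 0" using u0 R1 R2 by (auto simp: m1_def m2_def intro: bm_nonneg)
  show "ball_min u R1 * R1 powr (L / l * (real CARD('n) - 1) + 1 - 2) \<le> ball_min u R2 * R2 powr (L / l * (real CARD('n) - 1) + 1 - 2)"
  proof (cases "m1 = 0")
    case True then show ?thesis using m1p by (simp add: m1_def[symmetric] m2_def[symmetric])
  next
    case False
    then have m1pos: "m1 > 0" using m1p by simp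
    have key: "m1 * R2 powr (-\<nu>) / R1 powr (-\<nu>) \<le> m2" if nu: "\<beta> - 2 < \<nu>" for \<nu>
    proof (rule limit_eps_R3)
      show "\<nu> > 0" "0 < R1" "R1 \<le> R2" using nu b2 R1 R12 by auto
    next
      fix R3 assume R3: "R3 > R2"
      define b where "b = (real CARD('n) - 1) * L - (\<nu> + 1) * l"
      define c where "c = l + (real CARD('n) - 1) * L"
      have "b = l * (\<beta> - 2 - \<nu>)" using beta_rel[OF l(1), of L "real CARD('n)" \<nu>]
        by (simp only: b_def \<beta>_def)
      then have bneg: "b < 0" using nu l by (simp add: mult_pos_neg)
      have CN: "real CARD('n) - 1 \<ge> 0" by simp
      have cpos: "c > 0" using l CN by (simp add: c_def add_pos_nonneg)
      have nupos: "\<nu> > 0" using nu b2 by simp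
      define e0 where "e0 = min ((\<nu> + 1) * R1\<^sup>2) (R1\<^sup>2 * (-b) / c)"
      have "R1\<^sup>2 * b / c < 0" using R1 bneg cpos by (simp add: divide_neg_pos mult_pos_neg)
      then have e0: "e0 > 0" using R1 nupos bneg cpos by (simp add: e0_def)
      have "\<forall>\<^sub>F \<epsilon> in at_right 0. \<epsilon> > 0 \<and> \<epsilon> < e0"
        using e0 by (simp add: eventually_at_right_field) (metis order.strict_trans2 order_refl)
      then show "\<forall>\<^sub>F \<epsilon> in at_right 0.
       m1 * ((R2\<^sup>2 + \<epsilon>) powr (-\<nu>/2) - (R3\<^sup>2 + \<epsilon>) powr (-\<nu>/2))
           / ((R1\<^sup>2 + \<epsilon>) powr (-\<nu>/2) - (R3\<^sup>2 + \<epsilon>) powr (-\<nu>/2)) \<le> m2"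
      proof eventually_elim
        case (elim \<epsilon>)
        then have e: "\<epsilon> > 0" and ee: "\<epsilon> \<le> (\<nu> + 1) * R1\<^sup>2" "\<epsilon> * c < R1\<^sup>2 * (-b)"
          using cpos by (auto simp: e0_def field_simps)
        define a where "a = m1 / ((R1\<^sup>2 + \<epsilon>) powr (-\<nu>/2) - (R3\<^sup>2 + \<epsilon>) powr (-\<nu>/2))"
        have DC: "(R3\<^sup>2 + \<epsilon>) powr (-\<nu>/2) < (R1\<^sup>2 + \<epsilon>) powr (-\<nu>/2)" using R1 R12 R3 e nupos
          by (intro powr_less_mono2_neg) (auto intro: power_strict_mono add_nonneg_pos)
        have apos: "a > 0" using m1pos DC by (simp add: a_def)
        show ?case unfolding m1_def m2_def
        proof (rule comp_step[OF vs u0 u l nupos e _ R12 _ _ ee(1)])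
          show "0 < R1" "R2 < R3" "0 < ball_min u R1" using R1 R3 m1pos by (auto simp: m1_def)
          show "a = ball_min u R1 / ((R1\<^sup>2 + \<epsilon>) powr (-\<nu>/2) - (R3\<^sup>2 + \<epsilon>) powr (-\<nu>/2))"
            by (simp add: a_def m1_def)
        next
          fix x0 :: "real^'n" assume x0: "R1 < norm x0" "norm x0 < R3"
          have "R1\<^sup>2 \<le> x0 \<bullet> x0" using x0 R1 power_mono[of R1 "norm x0" 2] by (simp add: power2_norm_eq_inner)
          then have "(x0 \<bullet> x0) * b \<le> R1\<^sup>2 * b" using bneg by (intro mult_right_mono_neg) auto
          then have neg: "(x0 \<bullet> x0) * b + \<epsilon> * c < 0" using ee by linarith
          have "x0 \<bullet> x0 + \<epsilon> > 0" using e by (simp add: add_nonneg_pos)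
          then have "a * \<nu> * (x0 \<bullet> x0 + \<epsilon>) powr (-\<nu>/2 - 2) > 0" using apos nupos by simp
          then show "a * \<nu> * (x0 \<bullet> x0 + \<epsilon>) powr (-\<nu>/2 - 2) *
            ((x0 \<bullet> x0) * ((real CARD('n) - 1) * L - (\<nu> + 1) * l) + \<epsilon> * (l + (real CARD('n) - 1) * L))
            < (\<lambda>p. 0) ((2 * (a * (-\<nu>/2) * (x0 \<bullet> x0 + \<epsilon>) powr (-\<nu>/2 - 1))) *\<^sub>R x0)"
            using neg by (simp add: b_def[symmetric] c_def[symmetric] mult_pos_neg)
        qed
      qed
    qed
    have "((\<lambda>\<nu>. m1 * R2 powr (-\<nu>) / R1 powr (-\<nu>)) \<longlongrightarrow> m1 * R2 powr (-(\<beta> - 2)) / R1 powr (-(\<beta> - 2))) (at_right (\<beta> - 2))"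
      using R1 R2 by (intro tendsto_intros) auto
    moreover have "\<forall>\<^sub>F \<nu> in at_right (\<beta> - 2). m1 * R2 powr (-\<nu>) / R1 powr (-\<nu>) \<le> m2"
      by (simp add: eventually_at_right_field) (auto intro!: exI[of _ "\<beta> - 1"] key)
    ultimately have "m1 * R2 powr (-(\<beta> - 2)) / R1 powr (-(\<beta> - 2)) \<le> m2"
      by (intro tendsto_le[OF _ tendsto_const]) auto
    moreover have "m1 * R2 powr (-(\<beta> - 2)) / R1 powr (-(\<beta> - 2)) = m1 * R1 powr (\<beta> - 2) / R2 powr (\<beta> - 2)"
      unfolding powr_minus by (simp add: divide_inverse)
    ultimately have "m1 * R1 powr (\<beta> - 2) / R2 powr (\<beta> - 2) \<le> m2" by simp
    then have "m1 * R1 powr (\<beta> - 2) \<le> m2 * R2 powr (\<beta> - 2)"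
      using R2 by (simp add: pos_divide_le_eq)
    then show ?thesis
      unfolding m1_def m2_def \<beta>_def .
  qed
qed


lemma part2:
  fixes u :: "real^'n \<Rightarrow> real"
  assumes l: "0 < l" "l \<le> L" and u0: "\<And>x. u x \<ge> 0" and u: "lsc u"
    and vs: "visc_super (\<lambda>x r p M. pucci_max l L M - norm p powr \<gamma>) u"
    and bdef: "\<beta> = L / l * (real CARD('n) - 1) + 1"
    and g: "1 < \<gamma>" "\<gamma> \<le> \<beta> / (\<beta> - 1)" and b2: "\<beta> > 2"
    and nu: "0 < \<nu>" "\<nu> < \<beta> - 2"
  shows "\<exists>R\<^sub>\<nu>>0. mono_on {R\<^sub>\<nu>..} (\<lambda>R. ball_min u R * R powr \<nu>)"
proof (cases "ball_min u 1 = 0")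
  case True
  have z: "ball_min u R = 0" if "1 \<le> R" for R
    using bm_anti[of u 1 R] bm_nonneg[of u R] u0 that True by simp
  show ?thesis
    by (intro exI[of _ 1] conjI mono_onI) (auto simp: z)
next
  case False
  define m1 where "m1 = ball_min u 1"
  have m1p: "m1 > 0" using False bm_nonneg[of u 1] u0 by (simp add: m1_def)
  have "((\<lambda>\<nu>'. l * (\<beta> - 2 - \<nu>')) \<longlongrightarrow> l * (\<beta> - 2 - (\<beta> - 2))) (at_left (\<beta> - 2))"
    by (intro tendsto_intros)
  then have t1: "((\<lambda>\<nu>'. l * (\<beta> - 2 - \<nu>')) \<longlongrightarrow> 0) (at_left (\<beta> - 2))" by simp
  have t2: "((\<lambda>\<nu>'. (\<nu>' * m1) powr (\<gamma> - 1) * 1 powr (2 - \<gamma>)) \<longlongrightarrow> ((\<beta> - 2) * m1) powr (\<gamma> - 1) * 1 powr (2 - \<gamma>)) (at_left (\<beta> - 2))"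
    using b2 m1p by (intro tendsto_intros) auto
  have pos: "((\<beta> - 2) * m1) powr (\<gamma> - 1) * 1 powr (2 - \<gamma>) > 0" using b2 m1p by simp
  have "\<forall>\<^sub>F \<nu>' in at_left (\<beta> - 2). l * (\<beta> - 2 - \<nu>') < ((\<beta> - 2) * m1) powr (\<gamma> - 1) * 1 powr (2 - \<gamma>) / 2"
    using order_tendstoD(2)[OF t1, of "((\<beta> - 2) * m1) powr (\<gamma> - 1) * 1 powr (2 - \<gamma>) / 2"] pos by simp
  moreover have "\<forall>\<^sub>F \<nu>' in at_left (\<beta> - 2). ((\<beta> - 2) * m1) powr (\<gamma> - 1) * 1 powr (2 - \<gamma>) / 2 < (\<nu>' * m1) powr (\<gamma> - 1) * 1 powr (2 - \<gamma>)"
    using order_tendstoD(1)[OF t2, of "((\<beta> - 2) * m1) powr (\<gamma> - 1) * 1 powr (2 - \<gamma>) / 2"] pos by simp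
  moreover have "\<forall>\<^sub>F \<nu>' in at_left (\<beta> - 2). 0 < \<nu>' \<and> \<nu>' < \<beta> - 2"
    using b2 by (auto simp: eventually_at_left_field intro!: exI[of _ 0])
  ultimately have "\<forall>\<^sub>F \<nu>' in at_left (\<beta> - 2). 0 < \<nu>' \<and> \<nu>' < \<beta> - 2 \<and> l * (\<beta> - 2 - \<nu>') < (\<nu>' * m1) powr (\<gamma> - 1) * 1 powr (2 - \<gamma>)"
    by eventually_elim auto
  then obtain \<nu>' where nu': "0 < \<nu>'" "\<nu>' < \<beta> - 2" and Q': "l * (\<beta> - 2 - \<nu>') < (\<nu>' * m1) powr (\<gamma> - 1) * 1 powr (2 - \<gamma>)"
    using eventually_happens[of _ "at_left (\<beta> - 2)"] by (auto simp: trivial_limit_at_left_real)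
  have grow: "m1 \<le> ball_min u R * R powr \<nu>'" if "1 \<le> R" for R
  proof -
    have one: "(1::real) > 0" by simp
    have mm: "ball_min u 1 > 0" using m1p by (simp add: m1_def)
    have QQ: "l * (\<beta> - 2 - \<nu>') < (\<nu>' * ball_min u 1) powr (\<gamma> - 1) * 1 powr (2 - \<gamma>)"
      using Q' by (simp add: m1_def)
    show ?thesis using core2[OF l u0 u vs bdef g b2 nu' one mm QQ that] by (simp add: m1_def)
  qed
  have mlow: "m1 * R powr (-\<nu>') \<le> ball_min u R" if "1 \<le> R" for R
  proof -
    have "m1 * R powr (-\<nu>') \<le> ball_min u R * R powr \<nu>' * R powr (-\<nu>')"
      using grow[OF that] that by (intro mult_right_mono) auto
    also have "\<dots> = ball_min u R" using that by (simp add: powr_minus)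
    finally show ?thesis .
  qed
  define ex where "ex = 2 - \<gamma> - \<nu>' * (\<gamma> - 1)"
  have "(\<beta> - 2) * (\<gamma> - 1) \<le> 2 - \<gamma>"
  proof -
    have "\<gamma> * (\<beta> - 1) \<le> \<beta>" using g b2 by (simp add: pos_le_divide_eq)
    then show ?thesis by (simp add: algebra_simps)
  qed
  moreover have "\<nu>' * (\<gamma> - 1) < (\<beta> - 2) * (\<gamma> - 1)" using nu' g by (intro mult_strict_right_mono) auto
  ultimately have ex: "ex > 0" by (simp add: ex_def)
  define Cst where "Cst = (\<nu> * m1) powr (\<gamma> - 1)"
  define K where "K = l * (\<beta> - 2 - \<nu>)"
  have Cp: "Cst > 0" using nu m1p by (simp add: Cst_def)
  have Kp: "K > 0" using l nu by (simp add: K_def)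
  define R0 where "R0 = max 1 ((K / Cst + 1) powr (1 / ex))"
  have R0: "R0 \<ge> 1" by (simp add: R0_def)
  have big: "K < (\<nu> * ball_min u R) powr (\<gamma> - 1) * R powr (2 - \<gamma>)" if R: "R0 \<le> R" for R
  proof -
    have R1: "1 \<le> R" using R R0 by simp
    have "K / Cst + 1 = ((K / Cst + 1) powr (1 / ex)) powr ex"
      using ex Kp Cp by (simp add: powr_powr)
    also have "\<dots> \<le> R powr ex"
      using R ex Kp Cp by (intro powr_mono2) (auto simp: R0_def)
    finally have "K / Cst < R powr ex" by simp
    then have "K < Cst * R powr ex" using Cp by (simp add: pos_divide_less_eq mult.commute)
    also have "Cst * R powr ex = (\<nu> * (m1 * R powr (-\<nu>'))) powr (\<gamma> - 1) * R powr (2 - \<gamma>)"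
    proof -
      have "(\<nu> * (m1 * R powr (-\<nu>'))) powr (\<gamma> - 1) = Cst * R powr (-\<nu>' * (\<gamma> - 1))"
        using nu m1p R1 by (simp add: Cst_def powr_mult powr_powr mult.assoc)
      moreover have "R powr (-\<nu>' * (\<gamma> - 1)) * R powr (2 - \<gamma>) = R powr ex"
        using R1 by (simp add: powr_add[symmetric] ex_def algebra_simps)
      ultimately show ?thesis by (simp add: mult.assoc)
    qed
    also have "\<dots> \<le> (\<nu> * ball_min u R) powr (\<gamma> - 1) * R powr (2 - \<gamma>)"
      using mlow[OF R1] nu m1p R1 g by (intro mult_right_mono powr_mono2 mult_left_mono) auto
    finally show ?thesis .
  qed
  show ?thesis
  proof (intro exI[of _ R0] conjI mono_onI)
    show "R0 > 0" using R0 by simp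
  next
    fix R1 R2 assume R1: "R1 \<in> {R0..}" and R2: "R2 \<in> {R0..}" and R12: "R1 \<le> R2"
    have R11: "1 \<le> R1" using R1 R0 by simp
    have "0 < m1 * R1 powr (-\<nu>')" using m1p R11 by simp
    then have mp: "ball_min u R1 > 0" using mlow[OF R11] by linarith
    show "ball_min u R1 * R1 powr \<nu> \<le> ball_min u R2 * R2 powr \<nu>"
    proof -
      have R1p: "R1 > 0" using R11 by simp
      have Qb: "l * (\<beta> - 2 - \<nu>) < (\<nu> * ball_min u R1) powr (\<gamma> - 1) * R1 powr (2 - \<gamma>)"
        using big[of R1] R1 by (simp add: K_def)
      show ?thesis by (rule core2[OF l u0 u vs bdef g b2 nu R1p mp Qb R12])
    qed
  qed
qed

theorem lemma2p3:
  fixes u :: "real^'n \<Rightarrow> real" and l L :: real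
  assumes "0 < l" "l \<le> L"
    and "L / l * (real CARD('n) - 1) + 1 > 2"
    and "\<And>x. u x \<ge> 0" and "lsc u"
  shows "(visc_super (\<lambda>x r p M. pucci_max l L M) u \<longrightarrow>
           mono_on {0<..} (\<lambda>R. ball_min u R * R powr (L / l * (real CARD('n) - 1) + 1 - 2)))
       \<and> (\<forall>\<gamma>::real. 1 < \<gamma> \<and> \<gamma> \<le> (L / l * (real CARD('n) - 1) + 1) / (L / l * (real CARD('n) - 1) + 1 - 1) \<longrightarrow>
           visc_super (\<lambda>x r p M. pucci_max l L M - norm p powr \<gamma>) u \<longrightarrow>
           (ball_min u \<longlongrightarrow> 0) at_top \<longrightarrow>
           (\<forall>\<nu>. 0 < \<nu> \<and> \<nu> < L / l * (real CARD('n) - 1) + 1 - 2 \<longrightarrow>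
              (\<exists>R\<^sub>\<nu>>0. mono_on {R\<^sub>\<nu>..} (\<lambda>R. ball_min u R * R powr \<nu>))))"
proof (intro conjI impI allI)
  assume vs: "visc_super (\<lambda>x r p M. pucci_max l L M) u"
  show "mono_on {0<..} (\<lambda>R. ball_min u R * R powr (L / l * (real CARD('n) - 1) + 1 - 2))"
    by (rule part1[OF assms(1,2,3,4,5) vs])
next
  fix \<gamma> \<nu> :: real
  assume g: "1 < \<gamma> \<and> \<gamma> \<le> (L / l * (real CARD('n) - 1) + 1) / (L / l * (real CARD('n) - 1) + 1 - 1)"
    and vs: "visc_super (\<lambda>x r p M. pucci_max l L M - norm p powr \<gamma>) u"
    and nu: "0 < \<nu> \<and> \<nu> < L / l * (real CARD('n) - 1) + 1 - 2"
  show "\<exists>R\<^sub>\<nu>>0. mono_on {R\<^sub>\<nu>..} (\<lambda>R. ball_min u R * R powr \<nu>)"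
    using g nu by (intro part2[OF assms(1,2,4,5) vs refl]) (use assms(3) in auto)
qed

end
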